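(* Let $M$ be a nonempty Hausdorff space and $\sigma:\mathbb{R}\to\mathcal{T}(M)$ a spectral family in $\mathcal{T}(M)$, with admissible domain $\mathcal{D}(\sigma)$ and induced function $f_\sigma:\mathcal{D}(\sigma)\to\mathbb{R}$. Then $sp(\sigma)=\overline{f_\sigma(\mathcal{D}(\sigma))}$.
   Context: $\mathcal{T}(M)$ is the complete lattice of open subsets of $M$ with $\bigvee_k U_k=\bigcup_k U_k$ and $\bigwedge_k U_k=\mathrm{int}(\bigcap_k U_k)$. A spectral family in $\mathcal{T}(M)$ is a map $\sigma:\mathbb{R}\to\mathcal{T}(M)$ with $\sigma(\lambda)\subseteq\sigma(\mu)$ for $\lambda\le\mu$, $\sigma(\lambda)=\mathrm{int}\bigcap_{\mu>\lambda}\sigma(\mu)$ for all $\lambda$, $\mathrm{int}\bigcap_\lambda\sigma(\lambda)=\emptyset$ and $\bigcup_\lambda\sigma(\lambda)=M$. The admissible domain is $\mathcal{D}(\sigma):=M\setminus\bigcap_{\lambda\in\mathbb{R}}\sigma(\lambda)$, and $f_\sigma(x):=\inf\{\lambda : x\in\sigma(\lambda)\}$ for $x\in\mathcal{D}(\sigma)$. The resolvent set $R(\sigma)$ is the set of $\lambda\in\mathbb{R}$ such that $\sigma$ is constant on a neighbourhood of $\lambda$, and $sp(\sigma):=\mathbb{R}\setminus R(\sigma)$. *)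

theory Defs
  imports "HOL-Analysis.Analysis"
begin

text \<open>Spectral families in the lattice of open subsets of a topological space M
(here the type 'a, with M = UNIV). Meets are interiors of intersections.\<close>

definition spectral_family :: "(real \<Rightarrow> 'a::topological_space set) \<Rightarrow> bool" where
  "spectral_family \<sigma> \<longleftrightarrow>
     (\<forall>l. open (\<sigma> l)) \<and>
     (\<forall>l m. l \<le> m \<longrightarrow> \<sigma> l \<subseteq> \<sigma> m) \<and>
     (\<forall>l. \<sigma> l = interior (\<Inter>m\<in>{l<..}. \<sigma> m)) \<and>
     interior (\<Inter>l. \<sigma> l) = {} \<and>
     (\<Union>l. \<sigma> l) = UNIV"

definition adm_domain :: "(real \<Rightarrow> 'a set) \<Rightarrow> 'a set" where
  "adm_domain \<sigma> = UNIV - (\<Inter>l. \<sigma> l)"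

definition f_sigma :: "(real \<Rightarrow> 'a set) \<Rightarrow> 'a \<Rightarrow> real" where
  "f_sigma \<sigma> x = Inf {l. x \<in> \<sigma> l}"

definition resolvent_set :: "(real \<Rightarrow> 'a set) \<Rightarrow> real set" where
  "resolvent_set \<sigma> =
     {l. \<exists>U. open U \<and> l \<in> U \<and> (\<forall>m\<in>U. \<sigma> m = \<sigma> l)}"

definition spectrum_sf :: "(real \<Rightarrow> 'a set) \<Rightarrow> real set" where
  "spectrum_sf \<sigma> = UNIV - resolvent_set \<sigma>"

end

theory Submission
  imports Defs
begin

lemma sf_mono: "spectral_family \<sigma> \<Longrightarrow> l \<le> m \<Longrightarrow> \<sigma> l \<subseteq> \<sigma> m"
  unfolding spectral_family_def by blast

lemma f_facts:
  assumes sf: "spectral_family \<sigma>" and xD: "x \<in> adm_domain \<sigma>"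
  shows "bdd_below {l. x \<in> \<sigma> l}" "{l. x \<in> \<sigma> l} \<noteq> {}"
proof -
  obtain l0 where l0: "x \<notin> \<sigma> l0" using xD unfolding adm_domain_def by blast
  have "\<forall>l\<in>{l. x \<in> \<sigma> l}. l0 \<le> l"
  proof
    fix l assume "l \<in> {l. x \<in> \<sigma> l}"
    then have xl: "x \<in> \<sigma> l" by simp
    show "l0 \<le> l"
    proof (rule ccontr)
      assume "\<not> l0 \<le> l"
      then have "\<sigma> l \<subseteq> \<sigma> l0" using sf_mono[OF sf, of l l0] by simp
      then show False using l0 xl by blast
    qed
  qed
  then show "bdd_below {l. x \<in> \<sigma> l}" unfolding bdd_below_def by blast
  have "(\<Union>l. \<sigma> l) = UNIV" using sf unfolding spectral_family_def by (elim conjE)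
  then have "x \<in> (\<Union>l. \<sigma> l)" by simp
  then show "{l. x \<in> \<sigma> l} \<noteq> {}" by blast
qed

lemma resolvent_open: "open (resolvent_set \<sigma>)"
proof (subst open_subopen, intro ballI)
  fix l assume "l \<in> resolvent_set \<sigma>"
  then obtain U where U: "open U" "l \<in> U" "\<forall>m\<in>U. \<sigma> m = \<sigma> l"
    unfolding resolvent_set_def by blast
  have "U \<subseteq> resolvent_set \<sigma>"
  proof
    fix m assume m: "m \<in> U"
    have "\<forall>m'\<in>U. \<sigma> m' = \<sigma> m" using U(3) m by metis
    then show "m \<in> resolvent_set \<sigma>" unfolding resolvent_set_def using U m by blast
  qed
  then show "\<exists>T. open T \<and> l \<in> T \<and> T \<subseteq> resolvent_set \<sigma>" using U by blast
qed

theorem proposition2p33: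
  fixes \<sigma> :: "real \<Rightarrow> 'a::t2_space set"
  assumes "spectral_family \<sigma>"
  shows "spectrum_sf \<sigma> = closure (f_sigma \<sigma> ` adm_domain \<sigma>)"
proof
  have cl: "closed (spectrum_sf \<sigma>)"
    using resolvent_open[of \<sigma>] unfolding spectrum_sf_def closed_def by (simp add: Diff_Diff_Int)
  have "f_sigma \<sigma> ` adm_domain \<sigma> \<subseteq> spectrum_sf \<sigma>"
  proof
    fix y assume "y \<in> f_sigma \<sigma> ` adm_domain \<sigma>"
    then obtain x where xD: "x \<in> adm_domain \<sigma>" and y: "y = f_sigma \<sigma> x" by blast
    note bf = f_facts[OF assms xD]
    show "y \<in> spectrum_sf \<sigma>"
    proof (rule ccontr)
      assume "y \<notin> spectrum_sf \<sigma>"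
      then obtain U where U: "open U" "y \<in> U" "\<forall>m\<in>U. \<sigma> m = \<sigma> y"
        unfolding spectrum_sf_def resolvent_set_def by blast
      obtain e where e: "e > 0" "ball y e \<subseteq> U" using U openE by blast
      have "\<exists>l\<in>{l. x \<in> \<sigma> l}. l < y + e"
        using cInf_less_iff[OF bf(2) bf(1), of "y + e"] e y unfolding f_sigma_def by auto
      then obtain l where l: "x \<in> \<sigma> l" "l < y + e" by blast
      have "y \<le> l" using cInf_lower[OF _ bf(1), of l] l y unfolding f_sigma_def by auto
      have "l \<in> ball y e" using l \<open>y \<le> l\<close> by (auto simp: dist_real_def)
      then have "\<sigma> l = \<sigma> y" using U e by blast
      moreover have "y - e/2 \<in> ball y e" using e by (auto simp: dist_real_def)
      then have "\<sigma> (y - e/2) = \<sigma> y" using U e by blast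
      ultimately have "x \<in> \<sigma> (y - e/2)" using l by simp
      then have "y \<le> y - e/2" using cInf_lower[OF _ bf(1), of "y - e/2"] y unfolding f_sigma_def by auto
      then show False using e by simp
    qed
  qed
  then show "closure (f_sigma \<sigma> ` adm_domain \<sigma>) \<subseteq> spectrum_sf \<sigma>"
    using cl closure_minimal by blast
next
  show "spectrum_sf \<sigma> \<subseteq> closure (f_sigma \<sigma> ` adm_domain \<sigma>)"
  proof
    fix y assume ys: "y \<in> spectrum_sf \<sigma>"
    show "y \<in> closure (f_sigma \<sigma> ` adm_domain \<sigma>)"
    proof (rule ccontr)
      assume "y \<notin> closure (f_sigma \<sigma> ` adm_domain \<sigma>)"
      then obtain e where e: "e > 0" and far: "\<forall>z\<in>f_sigma \<sigma> ` adm_domain \<sigma>. \<not> dist z y < e"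
        unfolding closure_approachable by blast
      have key: "\<sigma> m' \<subseteq> \<sigma> m" if m: "m \<in> ball y e" "m' \<in> ball y e" "m \<le> m'" for m m'
      proof
        fix x assume x: "x \<in> \<sigma> m'"
        show "x \<in> \<sigma> m"
        proof (cases "x \<in> adm_domain \<sigma>")
          case False then show ?thesis unfolding adm_domain_def by blast
        next
          case True
          note bf = f_facts[OF assms True]
          have "f_sigma \<sigma> x \<le> m'" using cInf_lower[OF _ bf(1), of m'] x unfolding f_sigma_def by auto
          moreover have "\<not> dist (f_sigma \<sigma> x) y < e" using far True by blast
          ultimately have "f_sigma \<sigma> x < m" using m by (auto simp: dist_real_def)
          then have "\<exists>l\<in>{l. x \<in> \<sigma> l}. l < m"
            using cInf_less_iff[OF bf(2) bf(1), of m] unfolding f_sigma_def by auto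
          then obtain l where "x \<in> \<sigma> l" "l < m" by blast
          then show ?thesis using sf_mono[OF assms, of l m] by auto
        qed
      qed
      have "\<forall>m\<in>ball y e. \<sigma> m = \<sigma> y"
      proof
        fix m assume m: "m \<in> ball y e"
        have yb: "y \<in> ball y e" using e by simp
        show "\<sigma> m = \<sigma> y"
        proof (cases "m \<le> y")
          case True
          then show ?thesis using key[OF m yb True] sf_mono[OF assms True] by blast
        next
          case False
          then have "y \<le> m" by simp
          then show ?thesis using key[OF yb m] sf_mono[OF assms, of y m] by blast
        qed
      qed
      moreover have "open (ball y e)" "y \<in> ball y e" using e by auto
      ultimately have "y \<in> resolvent_set \<sigma>" unfolding resolvent_set_def by blast
      then show False using ys unfolding spectrum_sf_def by blast
    qed
  qed
qed

end
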